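(* For every finite group $G\le\mathrm{O}(d)$ and all $z_1,\ldots,z_n\in\mathbb{R}^d$, $\tilde\alpha(\{z_i\}_{i=1}^n,G)\le\alpha(\{z_i\}_{i=1}^n,G)$.
   Context: For $x\in\mathbb{R}^d$, $[x]:=\{gx:g\in G\}$. The open Voronoi cell $V_x$ is the set of $y$ such that $x$ is the unique maximizer of $\langle p,y\rangle$ over $p\in[x]$; $Q_x:=\bigcup_{p\in[x]}V_p$. $P(G):=\{x:\mathrm{stab}_G(x)=\{\mathrm{id}\}\}$, $\mathcal{O}:=P(G)\cap\bigcap_{i=1}^nQ_{z_i}$. For $x\in\mathcal{O}$, $v_i(x)$ is the unique element of $\arg\max_{p\in[z_i]}\langle p,x\rangle$. $S(x,y):=\{q\in[y]:V_q\cap V_x\ne\varnothing\}$, and $\mathcal{F}(x,y)$ is the set of functions $f:\{1,\ldots,n\}\to[y]$ with $f(i)\in S(x,y)\cap\arg\max_{q\in[y]}\langle q,v_i(x)\rangle$ for all $i$. Define $\alpha(\{z_i\},G):=\inf_{x,y\in\mathcal{O}}\max_{f\in\mathcal{F}(x,y)}\big(\sum_{w\in S(x,y)}\lambda_{\min}(\sum_{i\in f^{-1}(w)}v_i(x)v_i(x)^\top)\big)^{1/2}$. The Voronoi characteristic is $\chi(G):=\max_{x,y\in P(G)}|S(x,y)|$, and $\tilde\alpha(\{z_i\},G):=\min_{I\subseteq\{1,\ldots,n\},\,|I|\ge n/\chi(G)}\ \min_{(g_i)_{i\in I}\in G^I}\big(\lambda_{\min}(\sum_{i\in I}(g_iz_i)(g_iz_i)^\top)\big)^{1/2}$.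 *)

theory Defs
  imports "HOL-Analysis.Analysis"
begin

definition orbit :: "(real^'d^'d) set \<Rightarrow> real^'d \<Rightarrow> (real^'d) set" where
  "orbit G x = (\<lambda>g. g *v x) ` G"

definition vcell :: "(real^'d^'d) set \<Rightarrow> real^'d \<Rightarrow> (real^'d) set" where
  "vcell G x = {y. \<forall>p\<in>orbit G x. p \<noteq> x \<longrightarrow> inner p y < inner x y}"

definition qcell :: "(real^'d^'d) set \<Rightarrow> real^'d \<Rightarrow> (real^'d) set" where
  "qcell G x = (\<Union>p\<in>orbit G x. vcell G p)"

definition principal :: "(real^'d^'d) set \<Rightarrow> (real^'d) set" where
  "principal G = {x. \<forall>g\<in>G. g *v x = x \<longrightarrow> g = mat 1}"

definition goodset :: "(real^'d^'d) set \<Rightarrow> nat \<Rightarrow> (nat \<Rightarrow> real^'d) \<Rightarrow> (real^'d) set" where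
  "goodset G n z = principal G \<inter> (\<Inter>i\<in>{1..n}. qcell G (z i))"

definition vsel :: "(real^'d^'d) set \<Rightarrow> (nat \<Rightarrow> real^'d) \<Rightarrow> nat \<Rightarrow> real^'d \<Rightarrow> real^'d" where
  "vsel G z i x = (THE p. p \<in> orbit G (z i) \<and> (\<forall>q\<in>orbit G (z i). inner q x \<le> inner p x))"

definition Sset :: "(real^'d^'d) set \<Rightarrow> real^'d \<Rightarrow> real^'d \<Rightarrow> (real^'d) set" where
  "Sset G x y = {q \<in> orbit G y. vcell G q \<inter> vcell G x \<noteq> {}}"

definition Ffuns :: "(real^'d^'d) set \<Rightarrow> nat \<Rightarrow> (nat \<Rightarrow> real^'d) \<Rightarrow> real^'d \<Rightarrow> real^'d
    \<Rightarrow> (nat \<Rightarrow> real^'d) set" where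
  "Ffuns G n z x y = {f \<in> {1..n} \<rightarrow>\<^sub>E orbit G y.
     \<forall>i\<in>{1..n}. f i \<in> Sset G x y \<and>
       (\<forall>q\<in>orbit G y. inner q (vsel G z i x) \<le> inner (f i) (vsel G z i x))}"

definition lambda_min :: "real^'d^'d \<Rightarrow> real" where
  "lambda_min A = Min {l. \<exists>v. v \<noteq> 0 \<and> A *v v = l *\<^sub>R v}"

definition outer :: "real^'d \<Rightarrow> real^'d^'d" where
  "outer u = (\<chi> i j. u $ i * u $ j)"

definition alpha :: "(real^'d^'d) set \<Rightarrow> nat \<Rightarrow> (nat \<Rightarrow> real^'d) \<Rightarrow> real" where
  "alpha G n z = (INF xy \<in> goodset G n z \<times> goodset G n z.
     Max ((\<lambda>f. sqrt (\<Sum>w\<in>Sset G (fst xy) (snd xy).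
              lambda_min (\<Sum>i\<in>{i\<in>{1..n}. f i = w}. outer (vsel G z i (fst xy)))))
          ` Ffuns G n z (fst xy) (snd xy)))"

definition voronoi_char :: "(real^'d^'d) set \<Rightarrow> nat" where
  "voronoi_char G = Max {card (Sset G x y) | x y. x \<in> principal G \<and> y \<in> principal G}"

definition alpha_tilde :: "(real^'d^'d) set \<Rightarrow> nat \<Rightarrow> (nat \<Rightarrow> real^'d) \<Rightarrow> real" where
  "alpha_tilde G n z = Min {sqrt (lambda_min (\<Sum>i\<in>I. outer (g i *v z i))) | I g.
      I \<subseteq> {1..n} \<and> real (card I) \<ge> real n / real (voronoi_char G) \<and> g \<in> I \<rightarrow>\<^sub>E G}"

end

theory Submission
  imports Defs
begin


lemma inner_mv_transpose:
  fixes g :: "real^'d^'d"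
  shows "inner (g *v a) b = inner a (transpose g *v b)"
  by (metis dot_lmul_matrix transpose_matrix_vector inner_commute)

lemma outer_mv: "outer u *v v = (inner u v) *\<^sub>R u"
  by (simp add: vec_eq_iff outer_def matrix_vector_mult_def inner_vec_def sum_distrib_left
      sum_distrib_right mult_ac)

lemma sum_mv: "(\<Sum>i\<in>I. A i) *v v = (\<Sum>i\<in>I. A i *v v)"
proof (induction I rule: infinite_finite_induct)
  case (insert x F)
  then show ?case by (simp add: matrix_vector_mult_add_rdistrib)
qed auto

lemma sum_outer_mv: "(\<Sum>i\<in>I. outer (u i)) *v v = (\<Sum>i\<in>I. inner (u i) v *\<^sub>R u i)"
  by (simp add: sum_mv outer_mv)

lemma sum_outer_sym:
  "inner w ((\<Sum>i\<in>I. outer (u i)) *v v) = inner v ((\<Sum>i\<in>I. outer (u i)) *v w)"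
  by (simp add: sum_outer_mv inner_sum_right, rule sum.cong, auto simp: inner_commute)

lemma sum_outer_psd:
  "0 \<le> inner v ((\<Sum>i\<in>I. outer (u i)) *v v)"
  by (simp add: sum_outer_mv inner_sum_right, rule sum_nonneg, simp add: inner_commute)

lemma eig_finite:
  fixes A :: "real^'d^'d"
  assumes sym: "\<And>v w. inner w (A *v v) = inner v (A *v w)"
  shows "finite {l. \<exists>v. v \<noteq> 0 \<and> A *v v = l *\<^sub>R v}"
proof -
  define L where "L = {l. \<exists>v. v \<noteq> 0 \<and> A *v v = l *\<^sub>R v}"
  define e where "e l = (SOME v. v \<noteq> 0 \<and> A *v v = l *\<^sub>R v)" for l
  have e: "e l \<noteq> 0 \<and> A *v e l = l *\<^sub>R e l" if "l \<in> L" for l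
    using that unfolding L_def e_def by (metis (mono_tags, lifting) mem_Collect_eq someI)
  have inj: "inj_on e L"
  proof (rule inj_onI)
    fix l l' assume "l \<in> L" "l' \<in> L" "e l = e l'"
    then have "l *\<^sub>R e l = l' *\<^sub>R e l" "e l \<noteq> 0" using e by metis+
    then show "l = l'" by (metis scaleR_cancel_right)
  qed
  have orth: "pairwise orthogonal (e ` L)"
  proof (clarsimp simp: pairwise_def)
    fix l l' assume ll: "l \<in> L" "l' \<in> L" "e l \<noteq> e l'"
    then have ne: "l \<noteq> l'" by auto
    have "inner (e l') (A *v e l) = inner (e l) (A *v e l')" by (rule sym)
    then have "l * inner (e l') (e l) = l' * inner (e l) (e l')" using e ll by simp
    then have "(l - l') * inner (e l) (e l') = 0" by (simp add: inner_commute algebra_simps)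
    then show "orthogonal (e l) (e l')" using ne by (simp add: orthogonal_def)
  qed
  have "0 \<notin> e ` L" using e by auto
  then have "independent (e ` L)" using orth pairwise_orthogonal_independent by blast
  then have "finite (e ` L)" using independent_bound by blast
  then show ?thesis using inj finite_image_iff L_def by blast
qed

lemma eig_nonempty:
  fixes A :: "real^'d^'d"
  assumes sym: "\<And>v w. inner w (A *v v) = inner v (A *v w)"
  shows "\<exists>l v. v \<noteq> 0 \<and> A *v v = l *\<^sub>R v"
proof -
  define f where "f v = inner v (A *v v)" for v :: "real^'d"
  have cont: "continuous_on (sphere 0 1) f" unfolding f_def
    by (intro continuous_intros)
  obtain v0 where v0: "v0 \<in> sphere 0 1" and min: "\<And>y. y \<in> sphere 0 1 \<Longrightarrow> f v0 \<le> f y"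
    using continuous_attains_inf[OF compact_sphere _ cont] sphere_eq_empty by fastforce
  define l where "l = f v0"
  have fscale: "f (c *\<^sub>R u) = c^2 * f u" for c u
    by (simp add: f_def matrix_vector_mult_scaleR power2_eq_square)
  have ge: "l * inner u u \<le> f u" for u
  proof (cases "u = 0")
    case True then show ?thesis by (simp add: f_def)
  next
    case False
    then have nu: "norm u > 0" by simp
    have "(1 / norm u) *\<^sub>R u \<in> sphere 0 1" using nu by simp
    then have "l \<le> (1/norm u)^2 * f u" using min fscale l_def by metis
    then have "l * (norm u)^2 \<le> f u" using nu by (simp add: field_simps power2_eq_square)
    then show ?thesis by (simp add: power2_norm_eq_inner)
  qed
  define B where "B u = A *v u - l *\<^sub>R u" for u
  have Bpsd: "0 \<le> inner u (B u)" for u using ge[of u]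
    by (simp add: B_def f_def inner_diff_right)
  have Bsym: "inner w (B v) = inner v (B w)" for v w
    using sym[of v w] by (simp add: B_def inner_diff_right inner_commute)
  have Blin: "B (a + c *\<^sub>R b) = B a + c *\<^sub>R B b" for a b c
    by (simp add: B_def matrix_vector_right_distrib matrix_vector_mult_scaleR algebra_simps)
  have v0n: "inner v0 v0 = 1" using v0 by (simp add: power2_norm_eq_inner[symmetric])
  have B0: "inner v0 (B v0) = 0" using v0n by (simp add: B_def f_def l_def inner_diff_right)
  define b where "b = B v0"
  define c where "c = inner b (B b)"
  have c0: "c \<ge> 0" using Bpsd c_def by simp
  have quad: "0 \<le> 2 * t * inner b b + t^2 * c" for t
  proof -
    have "0 \<le> inner (v0 + t *\<^sub>R b) (B (v0 + t *\<^sub>R b))" by (rule Bpsd)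
    also have "\<dots> = inner v0 b + t * inner v0 (B b) + t * inner b b + t^2 * c"
      using Blin[of v0 t b] by (simp add: b_def c_def inner_add_left inner_add_right power2_eq_square
          algebra_simps)
    also have "inner v0 (B b) = inner b b" using Bsym[of v0 b] by (simp add: b_def)
    also have "inner v0 b = 0" using B0 b_def by simp
    finally show ?thesis by simp
  qed
  have "inner b b = 0"
  proof (rule ccontr)
    assume "inner b b \<noteq> 0"
    then have a: "inner b b > 0" by (simp add: order_less_le)
    define a where "a = inner b b"
    define t where "t = - a / (c + 1)"
    have ts: "t * (c+1) = - a" using c0 by (simp add: t_def)
    have "(c+1)^2 * (2 * t * a + t^2 * c) = 2*(t*(c+1))*a*(c+1) + (t*(c+1))^2*c"
      by (simp add: algebra_simps power2_eq_square)
    also have "\<dots> = - (a^2 * (c+2))" unfolding ts by (simp add: algebra_simps power2_eq_square)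
    also have "\<dots> < 0" using a c0 by (simp add: a_def)
    finally have "(c+1)^2 * (2 * t * a + t^2 * c) < 0" .
    moreover have "(c+1)^2 > 0" using c0 by simp
    ultimately have "2 * t * inner b b + t^2 * c < 0" unfolding a_def
      by (simp add: mult_less_0_iff)
    then show False using quad[of t] by simp
  qed
  then have "A *v v0 = l *\<^sub>R v0" by (simp add: b_def B_def)
  moreover have "v0 \<noteq> 0" using v0 by auto
  ultimately show ?thesis by blast
qed

lemma lambda_min_nonneg:
  fixes A :: "real^'d^'d"
  assumes sym: "\<And>v w. inner w (A *v v) = inner v (A *v w)"
    and psd: "\<And>v. 0 \<le> inner v (A *v v)"
  shows "0 \<le> lambda_min A"
proof -
  let ?L = "{l. \<exists>v. v \<noteq> 0 \<and> A *v v = l *\<^sub>R v}"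
  have "finite ?L" "?L \<noteq> {}" using eig_finite[OF sym] eig_nonempty[OF sym] by auto
  then have "lambda_min A \<in> ?L" unfolding lambda_min_def by (rule Min_in)
  then obtain v where v: "v \<noteq> 0" "A *v v = lambda_min A *\<^sub>R v" by blast
  have "0 \<le> inner v (A *v v)" by (rule psd)
  then have "0 \<le> lambda_min A * inner v v" using v by simp
  moreover have "inner v v > 0" using v by simp
  ultimately show ?thesis by (simp add: zero_le_mult_iff)
qed

lemma lambda_min_outer_nonneg: "0 \<le> lambda_min (\<Sum>i\<in>I. outer (u i))"
  by (rule lambda_min_nonneg[OF sum_outer_sym sum_outer_psd])

lemma lambda_min_zero: "lambda_min (0::real^'d^'d) = 0"
proof -
  let ?L = "{l. \<exists>v. v \<noteq> 0 \<and> (0::real^'d^'d) *v v = l *\<^sub>R v}"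
  have "?L \<noteq> {}" using eig_nonempty[of "0::real^'d^'d"] by simp
  moreover have "?L \<subseteq> {0}" by auto
  ultimately have "?L = {0}" by blast
  then show ?thesis unfolding lambda_min_def by simp
qed



lemma avoid_subspaces:
  fixes U :: "(real^'d) set"
  assumes "finite F" "open U" "U \<noteq> {}" "\<forall>S\<in>F. subspace S \<and> S \<noteq> UNIV"
  shows "\<exists>w\<in>U. \<forall>S\<in>F. w \<notin> S"
  using assms
proof (induction F arbitrary: U rule: finite_induct)
  case empty then show ?case by auto
next
  case (insert S F)
  have sS: "subspace S" "S \<noteq> UNIV" using insert.prems by auto
  have "dim S \<noteq> DIM(real^'d)"
  proof
    assume "dim S = DIM(real^'d)"
    then have "span S = UNIV" using dim_eq_full by blast
    then show False using sS span_eq_iff by metis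
  qed
  then have "dim S < dim (UNIV :: (real^'d) set)" using dim_subset_UNIV[of S] by (simp add: dim_UNIV)
  then have cl: "closure (UNIV - S) = UNIV" using dense_complement_subspace subspace_UNIV by blast
  have "U \<inter> closure (UNIV - S) \<noteq> {}" using insert.prems cl by simp
  then have "U \<inter> (UNIV - S) \<noteq> {}" using open_Int_closure_eq_empty insert.prems by blast
  then have ne: "U - S \<noteq> {}" by blast
  have "open (U - S)" using open_Diff[OF _ closed_subspace[OF sS(1)]] insert.prems by auto
  then obtain w where "w \<in> U - S" "\<forall>S\<in>F. w \<notin> S" using insert.IH[of "U - S"] ne insert.prems by auto
  then show ?case by auto
qed

lemma uniq_max:
  fixes Os :: "(real^'d) set"
  assumes "finite Os" "Os \<noteq> {}" "\<forall>q1\<in>Os. \<forall>q2\<in>Os. q1 \<noteq> q2 \<longrightarrow> inner (q1 - q2) w \<noteq> 0"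
  shows "\<exists>q\<in>Os. \<forall>q'\<in>Os. q' \<noteq> q \<longrightarrow> inner q' w < inner q w"
proof -
  define m where "m = Max ((\<lambda>q. inner q w) ` Os)"
  have "m \<in> (\<lambda>q. inner q w) ` Os" unfolding m_def using assms by (intro Max_in) auto
  then obtain q where q: "q \<in> Os" "inner q w = m" by auto
  have "\<forall>q'\<in>Os. inner q' w \<le> m" using assms m_def by auto
  then show ?thesis using q assms(3) by (metis inner_diff_left order_le_neq_trans right_minus_eq)
qed

lemma max_exists:
  fixes Os :: "(real^'d) set"
  assumes "finite Os" "Os \<noteq> {}"
  shows "\<exists>q\<in>Os. \<forall>q'\<in>Os. inner q' w \<le> inner q w"
proof -
  define m where "m = Max ((\<lambda>q. inner q w) ` Os)"
  have "m \<in> (\<lambda>q. inner q w) ` Os" unfolding m_def using assms by (intro Max_in) auto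
  then obtain q where q: "q \<in> Os" "inner q w = m" by auto
  have "\<forall>q'\<in>Os. inner q' w \<le> m" using assms m_def by auto
  then show ?thesis using q by auto
qed

locale fgrp =
  fixes G :: "(real^'d^'d) set"
  assumes fin: "finite G"
    and orth: "\<forall>g\<in>G. orthogonal_matrix g"
    and one: "mat 1 \<in> G"
    and mul: "\<forall>g\<in>G. \<forall>h\<in>G. g ** h \<in> G"
    and tr: "\<forall>g\<in>G. transpose g \<in> G"
begin

lemma orbit_finite: "finite (orbit G y)"
  unfolding orbit_def using fin by simp

lemma orbit_self: "y \<in> orbit G y"
  unfolding orbit_def using one by force

lemma orbit_ne: "orbit G y \<noteq> {}"
  using orbit_self by auto

lemma orbit_card: "card (orbit G y) \<le> card G"
  unfolding orbit_def using fin card_image_le by blast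

lemma orbit_act: assumes "g \<in> G" shows "orbit G (g *v y) = orbit G y"
proof
  show "orbit G (g *v y) \<subseteq> orbit G y"
    using mul assms by (auto simp: orbit_def matrix_vector_mul_assoc)
  show "orbit G y \<subseteq> orbit G (g *v y)"
  proof
    fix p assume "p \<in> orbit G y"
    then obtain h where h: "h \<in> G" "p = h *v y" by (auto simp: orbit_def)
    have "transpose g ** g = mat 1" using orth assms orthogonal_matrix_def by blast
    then have "transpose g *v (g *v y) = y" by (simp add: matrix_vector_mul_assoc)
    then have "p = (h ** transpose g) *v (g *v y)"
      using h by (simp add: matrix_vector_mul_assoc[symmetric])
    moreover have "h ** transpose g \<in> G" using mul tr h assms by blast
    ultimately show "p \<in> orbit G (g *v y)" by (auto simp: orbit_def)
  qed
qed

lemma orbit_mem: assumes "p \<in> orbit G y" shows "orbit G p = orbit G y"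
proof -
  obtain g where "g \<in> G" "p = g *v y" using assms by (auto simp: orbit_def)
  then show ?thesis using orbit_act by simp
qed

lemma norm_act: assumes "g \<in> G" shows "inner (g *v a) (g *v a) = inner a a"
proof -
  have "transpose g ** g = mat 1" using orth assms orthogonal_matrix_def by blast
  then show ?thesis by (simp add: inner_mv_transpose matrix_vector_mul_assoc)
qed

lemma vcell_open: "open (vcell G x)"
proof -
  have "vcell G x = (\<Inter>p\<in>{p\<in>orbit G x. p \<noteq> x}. {y. inner p y < inner x y})"
    unfolding vcell_def by auto
  moreover have "open {y. inner p y < inner x y}" for p :: "real^'d"
    by (intro open_Collect_less continuous_intros)
  ultimately show ?thesis using orbit_finite by (auto intro!: open_INT)
qed

lemma vsel_char:
  assumes "x \<in> qcell G (z i)"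
  shows "vsel G z i x \<in> orbit G (z i)"
    "\<forall>q\<in>orbit G (z i). inner q x \<le> inner (vsel G z i x) x"
proof -
  obtain p where p: "p \<in> orbit G (z i)" "x \<in> vcell G p" using assms by (auto simp: qcell_def)
  have op: "orbit G p = orbit G (z i)" using orbit_mem p by blast
  have strict: "\<forall>q\<in>orbit G (z i). q \<noteq> p \<longrightarrow> inner q x < inner p x"
    using p op by (auto simp: vcell_def)
  have P: "p \<in> orbit G (z i) \<and> (\<forall>q\<in>orbit G (z i). inner q x \<le> inner p x)"
    using strict p by (metis order_le_less)
  have "vsel G z i x = p"
    unfolding vsel_def
  proof (rule the_equality)
    show "p \<in> orbit G (z i) \<and> (\<forall>q\<in>orbit G (z i). inner q x \<le> inner p x)" by (rule P)
    fix p' assume "p' \<in> orbit G (z i) \<and> (\<forall>q\<in>orbit G (z i). inner q x \<le> inner p' x)"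
    then show "p' = p" using strict P by (meson not_le)
  qed
  then show "vsel G z i x \<in> orbit G (z i)"
    "\<forall>q\<in>orbit G (z i). inner q x \<le> inner (vsel G z i x) x" using P by auto
qed

end


context fgrp begin

lemma hyperplanes_ok:
  assumes "finite Os"
  shows "finite ((\<lambda>a. {w::real^'d. inner a w = 0}) ` {q1 - q2 | q1 q2. q1 \<in> Os \<and> q2 \<in> Os \<and> q1 \<noteq> q2})"
    "\<forall>S\<in>(\<lambda>a. {w::real^'d. inner a w = 0}) ` {q1 - q2 | q1 q2. q1 \<in> Os \<and> q2 \<in> Os \<and> q1 \<noteq> q2}.
        subspace S \<and> S \<noteq> UNIV"
proof -
  have "{q1 - q2 | q1 q2. q1 \<in> Os \<and> q2 \<in> Os \<and> q1 \<noteq> q2} \<subseteq> (\<lambda>(a,b). a - b) ` (Os \<times> Os)"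
    by auto
  then show "finite ((\<lambda>a. {w::real^'d. inner a w = 0}) ` {q1 - q2 | q1 q2. q1 \<in> Os \<and> q2 \<in> Os \<and> q1 \<noteq> q2})"
    using assms by (meson finite_SigmaI finite_imageI finite_subset)
  show "\<forall>S\<in>(\<lambda>a. {w::real^'d. inner a w = 0}) ` {q1 - q2 | q1 q2. q1 \<in> Os \<and> q2 \<in> Os \<and> q1 \<noteq> q2}.
        subspace S \<and> S \<noteq> UNIV"
  proof (clarsimp simp: subspace_hyperplane)
    fix q1 q2 :: "real^'d" assume "q1 \<noteq> q2" "{w. inner (q1 - q2) w = 0} = UNIV"
    then have "inner (q1 - q2) (q1 - q2) = 0" by blast
    then show False using \<open>q1 \<noteq> q2\<close> by simp
  qed
qed

lemma sset_exists:
  assumes p: "p \<in> orbit G z0" and pmax: "\<forall>q\<in>orbit G z0. inner q x \<le> inner p x"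
  shows "\<exists>q\<in>Sset G x y. \<forall>q'\<in>orbit G y. inner q' p \<le> inner q p"
proof -
  define Oy where "Oy = orbit G y"
  have fOy: "finite Oy" "Oy \<noteq> {}" using orbit_finite orbit_ne Oy_def by auto
  obtain qs where qs: "qs \<in> Oy" "\<forall>q'\<in>Oy. inner q' p \<le> inner qs p"
    using max_exists[OF fOy] by blast
  define N where "N = {q'\<in>Oy. inner q' p < inner qs p}"
  define W where "W = (\<Inter>q'\<in>N. {w. inner q' w < inner qs w})"
  have "open {w. inner q' w < inner qs w}" for q' :: "real^'d"
    by (intro open_Collect_less continuous_intros)
  then have oW: "open W" unfolding W_def using fOy N_def by (auto intro!: open_INT)
  have pW: "p \<in> W" unfolding W_def N_def by auto
  obtain e where e: "e > 0" "ball p e \<subseteq> W" using oW pW open_contains_ball by blast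
  define t where "t = e / (2 * (norm x + 1))"
  have nx: "norm x + 1 > 0" by (metis norm_ge_zero add_nonneg_pos zero_less_one)
  have t0: "t > 0" using e nx unfolding t_def by simp
  define pt where "pt = p + t *\<^sub>R x"
  have "t * norm x < e"
  proof -
    have "t * norm x \<le> t * (norm x + 1)" using t0 by simp
    also have "\<dots> = e / 2" unfolding t_def using nx by (simp add: field_simps)
    finally show ?thesis using e by simp
  qed
  then have "pt \<in> ball p e" using t0 by (simp add: pt_def dist_norm)
  then have ptW: "pt \<in> W" using e by blast
  have ptV: "pt \<in> vcell G x"
    unfolding vcell_def
  proof (clarify)
    fix r assume r: "r \<in> orbit G x" "r \<noteq> x"
    then obtain g where g: "g \<in> G" "r = g *v x" by (auto simp: orbit_def)
    have gt: "transpose g \<in> G" using tr g by blast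
    have "transpose g *v p \<in> orbit G p" using gt unfolding orbit_def by (rule rev_image_eqI) (rule refl)
    then have "transpose g *v p \<in> orbit G z0" using orbit_mem[OF p] by simp
    then have tp: "inner (transpose g *v p) x \<le> inner p x" using pmax by blast
    have "inner r p = inner x (transpose g *v p)" unfolding g(2) by (rule inner_mv_transpose)
    then have rp: "inner r p \<le> inner x p" using tp by (simp add: inner_commute)
    have "0 < inner (r - x) (r - x)" using r by simp
    also have "\<dots> = inner r r - 2 * inner r x + inner x x"
      by (simp add: inner_diff_left inner_diff_right inner_commute)
    also have "inner r r = inner x x" using norm_act g by simp
    finally have rx: "inner r x < inner x x" by simp
    have "t * inner r x < t * inner x x" using rx t0 by simp
    then show "inner r pt < inner x pt"
      using rp by (simp add: pt_def inner_add_right inner_commute add_le_less_mono)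
  qed
  define U where "U = vcell G x \<inter> W"
  have oU: "open U" "U \<noteq> {}" using vcell_open oW ptV ptW U_def by auto
  obtain w where w: "w \<in> U"
    "\<forall>S\<in>(\<lambda>a. {w::real^'d. inner a w = 0}) ` {q1 - q2 | q1 q2. q1 \<in> Oy \<and> q2 \<in> Oy \<and> q1 \<noteq> q2}. w \<notin> S"
    using avoid_subspaces[OF hyperplanes_ok(1)[OF fOy(1)] oU hyperplanes_ok(2)[OF fOy(1)]] by blast
  have "\<forall>q1\<in>Oy. \<forall>q2\<in>Oy. q1 \<noteq> q2 \<longrightarrow> inner (q1 - q2) w \<noteq> 0"
    using w(2) by blast
  then obtain q where q: "q \<in> Oy" "\<forall>q'\<in>Oy. q' \<noteq> q \<longrightarrow> inner q' w < inner q w"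
    using uniq_max[OF fOy] by blast
  have "orbit G q = Oy" using orbit_mem q Oy_def by blast
  then have "w \<in> vcell G q" using q by (auto simp: vcell_def)
  moreover have "w \<in> vcell G x" using w U_def by blast
  ultimately have qS: "q \<in> Sset G x y" using q Oy_def by (auto simp: Sset_def)
  have "\<not> inner q p < inner qs p"
  proof
    assume "inner q p < inner qs p"
    then have "q \<in> N" using q N_def by auto
    then have "inner q w < inner qs w" using w U_def W_def by blast
    moreover have "q \<noteq> qs" using \<open>inner q p < inner qs p\<close> by auto
    ultimately show False using q qs by force
  qed
  then have "\<forall>q'\<in>orbit G y. inner q' p \<le> inner q p" using qs Oy_def by force
  then show ?thesis using qS by blast
qed

lemma Ffuns_nonempty:
  assumes "x \<in> goodset G n z"
  shows "Ffuns G n z x y \<noteq> {}"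
proof -
  have ex: "\<exists>q. q \<in> Sset G x y \<and> (\<forall>q'\<in>orbit G y. inner q' (vsel G z i x) \<le> inner q (vsel G z i x))"
    if "i \<in> {1..n}" for i
  proof -
    have "x \<in> qcell G (z i)" using assms that by (auto simp: goodset_def)
    then show ?thesis using vsel_char sset_exists by blast
  qed
  define f where "f = restrict (\<lambda>i. SOME q. q \<in> Sset G x y \<and>
      (\<forall>q'\<in>orbit G y. inner q' (vsel G z i x) \<le> inner q (vsel G z i x))) {1..n}"
  have fi: "f i \<in> Sset G x y \<and> (\<forall>q'\<in>orbit G y. inner q' (vsel G z i x) \<le> inner (f i) (vsel G z i x))"
    if "i \<in> {1..n}" for i
    using someI_ex[OF ex[OF that]] that f_def by simp
  have "f \<in> {1..n} \<rightarrow>\<^sub>E orbit G y"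
  proof (rule PiE_I)
    show "f i \<in> orbit G y" if "i \<in> {1..n}" for i using fi[OF that] by (simp add: Sset_def)
    show "f i = undefined" if "i \<notin> {1..n}" for i unfolding f_def using that by auto
  qed
  then have "f \<in> Ffuns G n z x y"
    unfolding Ffuns_def using fi by blast
  then show ?thesis by blast
qed

lemma goodset_nonempty: "goodset G n z \<noteq> {}"
proof -
  define Oz where "Oz = (\<Union>i\<in>{1..n}. orbit G (z i))"
  have fOz: "finite Oz" using orbit_finite Oz_def by auto
  define F1 where "F1 = (\<lambda>g. {w::real^'d. g *v w = w}) ` (G - {mat 1})"
  define F2 where "F2 = (\<lambda>a. {w::real^'d. inner a w = 0}) ` {q1 - q2 | q1 q2. q1 \<in> Oz \<and> q2 \<in> Oz \<and> q1 \<noteq> q2}"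
  have F1ok: "finite F1" "\<forall>S\<in>F1. subspace S \<and> S \<noteq> UNIV"
  proof -
    show "finite F1" using fin F1_def by simp
    show "\<forall>S\<in>F1. subspace S \<and> S \<noteq> UNIV"
    proof
      fix S assume "S \<in> F1"
      then obtain g where g: "g \<in> G" "g \<noteq> mat 1" "S = {w. g *v w = w}" using F1_def by auto
      have "subspace S" unfolding g(3) subspace_def
        by (simp add: matrix_vector_right_distrib matrix_vector_mult_scaleR)
      moreover have "S \<noteq> UNIV"
      proof
        assume "S = UNIV"
        then have "\<forall>w. g *v w = mat 1 *v w" using g by auto
        then show False using g matrix_eq by blast
      qed
      ultimately show "subspace S \<and> S \<noteq> UNIV" by blast
    qed
  qed
  have fin12: "finite (F1 \<union> F2)" using F1ok(1) hyperplanes_ok(1)[OF fOz] unfolding F2_def by (rule finite_UnI)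
  have ok12: "\<forall>S\<in>F1 \<union> F2. subspace S \<and> S \<noteq> UNIV"
    using F1ok(2) hyperplanes_ok(2)[OF fOz] unfolding ball_Un F2_def by (rule conjI)
  obtain w where w: "\<forall>S\<in>F1 \<union> F2. w \<notin> S"
    using avoid_subspaces[OF fin12 open_UNIV UNIV_not_empty ok12] by blast
  have wS1: "w \<notin> S" if "S \<in> F1" for S using w that by simp
  have wS2: "w \<notin> S" if "S \<in> F2" for S using w that by simp
  have "w \<in> principal G"
    unfolding principal_def
  proof (intro CollectI ballI impI)
    fix g assume g: "g \<in> G" "g *v w = w"
    show "g = mat 1"
    proof (rule ccontr)
      assume "g \<noteq> mat 1"
      then have "g \<in> G - {mat 1}" using g by blast
      then have "{w::real^'d. g *v w = w} \<in> F1" unfolding F1_def by (rule imageI)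
      then have "w \<notin> {w::real^'d. g *v w = w}" by (rule wS1)
      then show False using g(2) by simp
    qed
  qed
  moreover have "w \<in> qcell G (z i)" if "i \<in> {1..n}" for i
  proof -
    have sub: "orbit G (z i) \<subseteq> Oz" using that Oz_def by blast
    have "\<forall>q1\<in>orbit G (z i). \<forall>q2\<in>orbit G (z i). q1 \<noteq> q2 \<longrightarrow> inner (q1 - q2) w \<noteq> 0"
    proof (intro ballI impI)
      fix q1 q2 assume qq: "q1 \<in> orbit G (z i)" "q2 \<in> orbit G (z i)" "q1 \<noteq> q2"
      have "q1 - q2 \<in> {q1 - q2 | q1 q2. q1 \<in> Oz \<and> q2 \<in> Oz \<and> q1 \<noteq> q2}" using qq sub by blast
      then have "{w::real^'d. inner (q1 - q2) w = 0} \<in> F2" unfolding F2_def by (rule imageI)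
      then have "w \<notin> {w::real^'d. inner (q1 - q2) w = 0}" by (rule wS2)
      then show "inner (q1 - q2) w \<noteq> 0" by simp
    qed
    then obtain q where q: "q \<in> orbit G (z i)" "\<forall>q'\<in>orbit G (z i). q' \<noteq> q \<longrightarrow> inner q' w < inner q w"
      using uniq_max[OF orbit_finite orbit_ne] by blast
    have "orbit G q = orbit G (z i)" using orbit_mem q by blast
    then have "w \<in> vcell G q" using q by (auto simp: vcell_def)
    then show ?thesis using q by (auto simp: qcell_def)
  qed
  ultimately show ?thesis by (auto simp: goodset_def)
qed

end


lemma pigeon:
  fixes f :: "nat \<Rightarrow> 'a"
  assumes "finite S" "S \<noteq> {}" "finite A" "f ` A \<subseteq> S"
  shows "\<exists>w\<in>S. real (card A) / real (card S) \<le> real (card {i\<in>A. f i = w})"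
proof (rule ccontr)
  assume "\<not> ?thesis"
  then have lt: "\<forall>w\<in>S. real (card {i\<in>A. f i = w}) < real (card A) / real (card S)" by auto
  have "(\<Sum>w\<in>S. card {i\<in>A. f i = w}) = (\<Sum>i\<in>A. (1::nat))"
  proof (rule sum_multicount_gen[OF assms(1) assms(3)])
    show "\<forall>j\<in>A. card {w \<in> S. f j = w} = 1"
    proof
      fix j assume "j \<in> A"
      then have "f j \<in> S" using assms by auto
      then have "{w \<in> S. f j = w} = {f j}" by auto
      then show "card {w \<in> S. f j = w} = 1" by simp
    qed
  qed
  then have "(\<Sum>w\<in>S. card {i\<in>A. f i = w}) = card A" by simp
  then have "real (\<Sum>w\<in>S. card {i\<in>A. f i = w}) = real (card A)" by (rule arg_cong)
  then have eq: "(\<Sum>w\<in>S. real (card {i\<in>A. f i = w})) = real (card A)"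
    unfolding of_nat_sum .
  have "(\<Sum>w\<in>S. real (card {i\<in>A. f i = w})) < (\<Sum>w\<in>S. real (card A) / real (card S))"
    using lt assms by (intro sum_strict_mono) auto
  also have "\<dots> = real (card A)" using assms by simp
  finally show False using eq by simp
qed

context fgrp begin

definition "atset n z = {sqrt (lambda_min (\<Sum>i\<in>I. outer (g i *v z i))) | I g.
      I \<subseteq> {1..n} \<and> real (card I) \<ge> real n / real (voronoi_char G) \<and> g \<in> I \<rightarrow>\<^sub>E G}"

lemma atset_finite: "finite (atset n z)"
proof -
  have "atset n z \<subseteq> (\<lambda>(I,g). sqrt (lambda_min (\<Sum>i\<in>I. outer (g i *v z i)))) ` (SIGMA I:Pow {1..n}. I \<rightarrow>\<^sub>E G)"
    unfolding atset_def by force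
  moreover have "finite (SIGMA I:Pow {1..n}. I \<rightarrow>\<^sub>E G)"
    using fin by (intro finite_SigmaI finite_PiE) (auto intro: finite_subset)
  ultimately show ?thesis using finite_subset by blast
qed

lemma at_le:
  assumes "I \<subseteq> {1..n}" "real (card I) \<ge> real n / real (voronoi_char G)" "g \<in> I \<rightarrow>\<^sub>E G"
  shows "alpha_tilde G n z \<le> sqrt (lambda_min (\<Sum>i\<in>I. outer (g i *v z i)))"
proof -
  have "sqrt (lambda_min (\<Sum>i\<in>I. outer (g i *v z i))) \<in> atset n z"
    unfolding atset_def using assms by blast
  then show ?thesis unfolding alpha_tilde_def atset_def[symmetric] using atset_finite by simp
qed

lemma chi_bound:
  assumes "x \<in> principal G" "y \<in> principal G"
  shows "card (Sset G x y) \<le> voronoi_char G"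
proof -
  have sub: "{card (Sset G x y) | x y. x \<in> principal G \<and> y \<in> principal G} \<subseteq> {..card G}"
  proof
    fix k assume "k \<in> {card (Sset G x y) | x y. x \<in> principal G \<and> y \<in> principal G}"
    then obtain x y where k: "k = card (Sset G x y)" by blast
    have "Sset G x y \<subseteq> orbit G y" by (auto simp: Sset_def)
    then have "card (Sset G x y) \<le> card (orbit G y)" using orbit_finite card_mono by blast
    moreover have "card (orbit G y) \<le> card G" by (rule orbit_card)
    ultimately show "k \<in> {..card G}" using k by simp
  qed
  then have "finite {card (Sset G x y) | x y. x \<in> principal G \<and> y \<in> principal G}"
    using finite_subset by blast
  then show ?thesis unfolding voronoi_char_def using assms by (intro Max_ge) blast+
qed

lemma main_pair:
  assumes x: "x \<in> goodset G n z" and y: "y \<in> goodset G n z"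
    and f: "f \<in> Ffuns G n z x y"
  shows "alpha_tilde G n z \<le> sqrt (\<Sum>w\<in>Sset G x y.
              lambda_min (\<Sum>i\<in>{i\<in>{1..n}. f i = w}. outer (vsel G z i x)))"
proof -
  let ?S = "Sset G x y"
  let ?M = "\<lambda>w. lambda_min (\<Sum>i\<in>{i\<in>{1..n}. f i = w}. outer (vsel G z i x))"
  have fS: "finite ?S" using orbit_finite by (rule rev_finite_subset) (auto simp: Sset_def)
  have nn: "\<And>w. 0 \<le> ?M w" by (rule lambda_min_outer_nonneg)
  have fi: "f i \<in> ?S" if "i \<in> {1..n}" for i
  proof -
    have "\<forall>i\<in>{1..n}. f i \<in> Sset G x y" using f unfolding Ffuns_def by blast
    then show ?thesis using that by blast
  qed
  have fimg: "f ` {1..n} \<subseteq> ?S" using fi by (rule image_subsetI)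
  show ?thesis
  proof (cases "?S = {}")
    case True
    then have n0: "n = 0" using fimg by (cases n) auto
    have "alpha_tilde G n z \<le> sqrt (lambda_min (\<Sum>i\<in>{}. outer (restrict (\<lambda>_. mat 1) {} i *v z i)))"
      using n0 by (intro at_le) auto
    also have "\<dots> = 0" by (simp add: lambda_min_zero)
    finally show ?thesis using True by simp
  next
    case False
    obtain w where w: "w \<in> ?S" and cw: "real n / real (card ?S) \<le> real (card {i\<in>{1..n}. f i = w})"
      using pigeon[OF fS False _ fimg] by auto
    have xp: "x \<in> principal G" "y \<in> principal G" using x y by (auto simp: goodset_def)
    have cS: "card ?S > 0" using fS False by (simp add: card_gt_0_iff)
    have "card ?S \<le> voronoi_char G" using chi_bound[OF xp] .
    then have "real n / real (voronoi_char G) \<le> real n / real (card ?S)"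
      using cS by (intro divide_left_mono) auto
    then have cJ: "real n / real (voronoi_char G) \<le> real (card {i\<in>{1..n}. f i = w})" using cw by linarith
    define J where "J = {i\<in>{1..n}. f i = w}"
    have ex: "\<exists>g. g \<in> G \<and> vsel G z i x = g *v z i" if "i \<in> J" for i
    proof -
      have "x \<in> qcell G (z i)" using x that J_def by (auto simp: goodset_def)
      then have "vsel G z i x \<in> orbit G (z i)" by (rule vsel_char)
      then show ?thesis by (auto simp: orbit_def)
    qed
    define g where "g = restrict (\<lambda>i. SOME g. g \<in> G \<and> vsel G z i x = g *v z i) J"
    have gi: "g i \<in> G \<and> vsel G z i x = g i *v z i" if "i \<in> J" for i
      using someI_ex[OF ex[OF that]] that g_def by simp
    have gP: "g \<in> J \<rightarrow>\<^sub>E G"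
    proof (rule PiE_I)
      show "g i \<in> G" if "i \<in> J" for i using gi[OF that] by blast
      show "g i = undefined" if "i \<notin> J" for i unfolding g_def using that by auto
    qed
    have sJ: "(\<Sum>i\<in>J. outer (g i *v z i)) = (\<Sum>i\<in>J. outer (vsel G z i x))"
      using gi by (intro sum.cong) auto
    have "J \<subseteq> {1..n}" unfolding J_def by blast
    moreover have "real (card J) \<ge> real n / real (voronoi_char G)" using cJ unfolding J_def .
    ultimately have "alpha_tilde G n z \<le> sqrt (lambda_min (\<Sum>i\<in>J. outer (g i *v z i)))"
      using gP by (rule at_le)
    then have "alpha_tilde G n z \<le> sqrt (lambda_min (\<Sum>i\<in>J. outer (vsel G z i x)))"
      by (simp only: sJ)
    then have "alpha_tilde G n z \<le> sqrt (?M w)" unfolding J_def .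
    also have "?M w \<le> (\<Sum>w\<in>?S. ?M w)"
      using fS w nn by (intro member_le_sum) auto
    then have "sqrt (?M w) \<le> sqrt (\<Sum>w\<in>?S. ?M w)" by simp
    finally show ?thesis .
  qed
qed

lemma result: "alpha_tilde G n z \<le> alpha G n z"
  unfolding alpha_def
proof (rule cINF_greatest)
  show "goodset G n z \<times> goodset G n z \<noteq> {}" using goodset_nonempty by simp
  fix xy assume xy: "xy \<in> goodset G n z \<times> goodset G n z"
  obtain x y where xy': "xy = (x, y)" "x \<in> goodset G n z" "y \<in> goodset G n z" using xy by auto
  have fF: "finite (Ffuns G n z x y)"
    by (rule rev_finite_subset[OF finite_PiE[OF finite_atLeastAtMost orbit_finite]])
      (auto simp: Ffuns_def)
  obtain f where f: "f \<in> Ffuns G n z x y" using Ffuns_nonempty[OF xy'(2)] by blast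
  have "alpha_tilde G n z \<le> sqrt (\<Sum>w\<in>Sset G x y.
              lambda_min (\<Sum>i\<in>{i\<in>{1..n}. f i = w}. outer (vsel G z i x)))"
    using main_pair[OF xy'(2,3) f] .
  also have "\<dots> \<le> Max ((\<lambda>f. sqrt (\<Sum>w\<in>Sset G x y.
              lambda_min (\<Sum>i\<in>{i\<in>{1..n}. f i = w}. outer (vsel G z i x)))) ` Ffuns G n z x y)"
    using fF f by (intro Max_ge) auto
  finally show "alpha_tilde G n z \<le> Max ((\<lambda>f. sqrt (\<Sum>w\<in>Sset G (fst xy) (snd xy).
              lambda_min (\<Sum>i\<in>{i\<in>{1..n}. f i = w}. outer (vsel G z i (fst xy))))) ` Ffuns G n z (fst xy) (snd xy))"
    using xy' by simp
qed

end

theorem corollary30: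
  fixes G :: "(real^'d^'d) set" and n :: nat and z :: "nat \<Rightarrow> real^'d"
  assumes "finite G"
    and "\<forall>g\<in>G. orthogonal_matrix g"
    and "mat 1 \<in> G"
    and "\<forall>g\<in>G. \<forall>h\<in>G. g ** h \<in> G"
    and "\<forall>g\<in>G. transpose g \<in> G"
  shows "alpha_tilde G n z \<le> alpha G n z"
proof -
  interpret fgrp G using assms by unfold_locales
  show ?thesis by (rule result)
qed

end
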